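(* Let $m\ge 2$, and let $C_1,\dots,C_m>0$, $\mu^c_1,\dots,\mu^c_m\ge 0$, $\theta^c_1,\dots,\theta^c_m\ge 0$ and $\lambda^c\ge 0$ be real numbers. Consider the system of ordinary differential equations $$\begin{aligned} x_1'(t)&=\mu^c_1\frac{C_1-x_1}{C_1}-\theta^c_1x_1-\mu^c_2\frac{x_1}{C_1}\frac{C_2-x_2}{C_2},\\ x_i'(t)&=\mu^c_i\frac{x_{i-1}}{C_{i-1}}\frac{C_i-x_i}{C_i}-\theta^c_ix_i-\mu^c_{i+1}\frac{x_i}{C_i}\frac{C_{i+1}-x_{i+1}}{C_{i+1}},\qquad 2\le i\le m-1,\\ x_m'(t)&=\mu^c_m\frac{x_{m-1}}{C_{m-1}}\frac{C_m-x_m}{C_m}-\theta^c_mx_m-\lambda^c, \end{aligned}$$ where $x_i=x_i(t)$. Let $(x_1^*,\dots,x_m^* )$ be an equilibrium point of this system (a point where all right-hand sides vanish) with $0\le x_i^*\le C_i$ for $i=1,\dots,m$. If $$\frac{\mu^c_2}{C_1}<\frac{\mu^c_1}{C_1}+\theta^c_1,\qquad \frac{\mu^c_i}{C_{i-1}}+\frac{\mu^c_{i+1}}{C_{i+1}}<\theta^c_i\ \ (2\le i\le m-1),\qquad \frac{\mu^c_m}{C_{m-1}}<\theta^c_m,$$ then $(x_1^*,\dots,x_m^* )$ is a stable equilibrium point (all eigenvalues of the Jacobian of the system at this point have negative real part).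
   Context: The system models an $m$-echelon inventory system in which the warehouses of each echelon are aggregated into one warehouse: $x_i(t)$ is the inventory level of echelon $i$, $C_i$ its maximum inventory level, $\mu^c_i$ its maximum supply rate, $\theta^c_i$ its average deterioration percentage per unit time, and $\lambda^c$ is the demand rate at the lowest echelon $m$. When $m=2$ there are no middle equations and no middle conditions. *)

theory Defs
  imports "HOL-Analysis.Analysis" "Jordan_Normal_Form.Char_Poly"
begin

text \<open>States are functions
  x :: nat => real, used at indices 1..m; the i-th component of the vector field
  (1 <= i <= m) is inv_rhs m C mu th lam x i.\<close>

definition inv_rhs ::
  "nat \<Rightarrow> (nat \<Rightarrow> real) \<Rightarrow> (nat \<Rightarrow> real) \<Rightarrow> (nat \<Rightarrow> real) \<Rightarrow> real \<Rightarrow> (nat \<Rightarrow> real) \<Rightarrow> nat \<Rightarrow> real"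
where
  "inv_rhs m C mu th lam x i =
     (if i = 1 then
        mu 1 * ((C 1 - x 1) / C 1) - th 1 * x 1 - mu 2 * (x 1 / C 1) * ((C 2 - x 2) / C 2)
      else if i = m then
        mu m * (x (m - 1) / C (m - 1)) * ((C m - x m) / C m) - th m * x m - lam
      else
        mu i * (x (i - 1) / C (i - 1)) * ((C i - x i) / C i) - th i * x i
          - mu (i + 1) * (x i / C i) * ((C (i + 1) - x (i + 1)) / C (i + 1)))"

text \<open>Jacobian at the point x: the m x m matrix whose (i,j) entry (0-based) is the
  partial derivative of component i+1 with respect to the variable x_(j+1).\<close>

definition inv_jacobian ::
  "nat \<Rightarrow> (nat \<Rightarrow> real) \<Rightarrow> (nat \<Rightarrow> real) \<Rightarrow> (nat \<Rightarrow> real) \<Rightarrow> real \<Rightarrow> (nat \<Rightarrow> real) \<Rightarrow> real mat"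
where
  "inv_jacobian m C mu th lam x =
     mat m m (\<lambda>(i, j). deriv (\<lambda>s. inv_rhs m C mu th lam (x((j + 1) := s)) (i + 1)) (x (j + 1)))"

definition stable_point ::
  "nat \<Rightarrow> (nat \<Rightarrow> real) \<Rightarrow> (nat \<Rightarrow> real) \<Rightarrow> (nat \<Rightarrow> real) \<Rightarrow> real \<Rightarrow> (nat \<Rightarrow> real) \<Rightarrow> bool"
where
  "stable_point m C mu th lam x =
     (\<forall>k. eigenvalue (map_mat complex_of_real (inv_jacobian m C mu th lam x)) k \<longrightarrow> Re k < 0)"

end

theory Submission imports Defs begin

definition J :: "nat \<Rightarrow> (nat \<Rightarrow> real) \<Rightarrow> (nat \<Rightarrow> real) \<Rightarrow> (nat \<Rightarrow> real) \<Rightarrow> (nat \<Rightarrow> real) \<Rightarrow> nat \<Rightarrow> nat \<Rightarrow> real" where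
 "J m C mu th x p q = (if q = p then (if p = 1 then -(mu 1/C 1) - th 1 - mu 2/C 1*((C 2 - x 2)/C 2)
   else if p = m then -(mu m * x (m-1)/(C (m-1)*C m)) - th m
   else -(mu p*x(p-1)/(C(p-1)*C p)) - th p - mu(p+1)/C p*((C(p+1)-x(p+1))/C(p+1)))
  else if q = p+1 then mu (p+1)*x p/(C p*C(p+1))
  else if q+1 = p then mu p/C(p-1)*((C p - x p)/C p) else 0)"

lemma affine_deriv: fixes g :: "real \<Rightarrow> real" assumes "\<And>t. g t = a*t + g 0" shows "deriv g y = a"
proof -
  define c where "c = g 0"
  have eq: "g = (\<lambda>t. a*t + c)" using assms unfolding c_def by (intro ext)
  show ?thesis unfolding eq by (rule DERIV_imp_deriv) (auto intro!: derivative_eq_intros)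
qed




lemma t1: assumes "m \<ge> 2"
  shows "inv_rhs m C mu th lam (x(1 := s)) 1 = J m C mu th x 1 1 * s + inv_rhs m C mu th lam (x(1 := 0)) 1"
  using assms by (simp add: inv_rhs_def J_def divide_inverse algebra_simps)
lemma t2: assumes "m \<ge> 2"
  shows "inv_rhs m C mu th lam (x(2 := s)) 1 = J m C mu th x 1 2 * s + inv_rhs m C mu th lam (x(2 := 0)) 1"
  using assms by (simp add: inv_rhs_def J_def divide_inverse algebra_simps numeral_2_eq_2)
lemma t3: assumes a: "p \<noteq> 1" "p \<noteq> m" "p - 1 \<noteq> p" "p \<noteq> p+1" "p - 1 \<noteq> p+1" "p - 1 + 1 = p"
  shows "inv_rhs m C mu th lam (x(p := s)) p = J m C mu th x p p * s + inv_rhs m C mu th lam (x(p := 0)) p"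
  using a by (simp add: inv_rhs_def J_def divide_inverse algebra_simps)
lemma t4: assumes a: "p \<noteq> 1" "p \<noteq> m" "p - 1 \<noteq> p" "p \<noteq> p+1" "p - 1 \<noteq> p+1" "p - 1 + 1 = p"
  shows "inv_rhs m C mu th lam (x(p-1 := s)) p = J m C mu th x p (p-1) * s + inv_rhs m C mu th lam (x(p-1 := 0)) p"
  using a by (simp add: inv_rhs_def J_def divide_inverse algebra_simps)
lemma t5: assumes a: "p \<noteq> 1" "p \<noteq> m" "p - 1 \<noteq> p" "p \<noteq> p+1" "p - 1 \<noteq> p+1" "p - 1 + 1 = p"
  shows "inv_rhs m C mu th lam (x(p+1 := s)) p = J m C mu th x p (p+1) * s + inv_rhs m C mu th lam (x(p+1 := 0)) p"
  using a by (simp add: inv_rhs_def J_def divide_inverse algebra_simps)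
lemma t6: assumes "q \<noteq> 1" "q \<noteq> 2" "q \<noteq> Suc 1" "q+1 \<noteq> 1" "m \<ge> 2"
  shows "inv_rhs m C mu th lam (x(q := s)) 1 = J m C mu th x 1 q * s + inv_rhs m C mu th lam (x(q := 0)) 1"
  using assms by (simp add: inv_rhs_def J_def)
lemma t7: assumes a: "m \<noteq> 1" "m - 1 \<noteq> m" "m \<noteq> m+1" "m - 1 \<noteq> m+1" "m - 1 + 1 = m"
  shows "inv_rhs m C mu th lam (x(m := s)) m = J m C mu th x m m * s + inv_rhs m C mu th lam (x(m := 0)) m"
  using a by (simp add: inv_rhs_def J_def divide_inverse algebra_simps)
lemma t8: assumes a: "m \<noteq> 1" "m - 1 \<noteq> m" "m \<noteq> m+1" "m - 1 \<noteq> m+1" "m - 1 + 1 = m"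
  shows "inv_rhs m C mu th lam (x(m - 1 := s)) m = J m C mu th x m (m - 1) * s + inv_rhs m C mu th lam (x(m - 1 := 0)) m"
  using a by (simp add: inv_rhs_def J_def divide_inverse algebra_simps)
lemma t9: assumes a: "m \<noteq> 1" "m - 1 \<noteq> m" "m \<noteq> m+1" "m - 1 \<noteq> m+1" "m - 1 + 1 = m"
  and "q \<noteq> m" "q \<noteq> m - 1" "q \<noteq> m+1" "q + 1 \<noteq> m"
  shows "inv_rhs m C mu th lam (x(q := s)) m = J m C mu th x m q * s + inv_rhs m C mu th lam (x(q := 0)) m"
  using assms by (simp add: inv_rhs_def J_def)
lemma t10: assumes a: "p \<noteq> 1" "p \<noteq> m" "p - 1 \<noteq> p" "p \<noteq> p+1" "p - 1 \<noteq> p+1" "p - 1 + 1 = p"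
  and "q \<noteq> p" "q \<noteq> p - 1" "q \<noteq> p+1" "q + 1 \<noteq> p"
  shows "inv_rhs m C mu th lam (x(q := s)) p = J m C mu th x p q * s + inv_rhs m C mu th lam (x(q := 0)) p"
  using assms by (simp add: inv_rhs_def J_def)
lemma rhs_affine:
  assumes m: "m \<ge> 2" and p: "1 \<le> p" "p \<le> m" and q: "1 \<le> q" "q \<le> m"
  shows "inv_rhs m C mu th lam (x(q := s)) p = J m C mu th x p q * s + inv_rhs m C mu th lam (x(q := 0)) p"
proof (cases "p = 1")
  case pe: True
  show ?thesis
  proof (cases "q = 1")
    case True show ?thesis unfolding pe True by (rule t1[OF m])
  next
    case q1: False
    show ?thesis
    proof (cases "q = 2")
      case True show ?thesis unfolding pe True by (rule t2[OF m])
    next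
      case False
      show ?thesis unfolding pe by (rule t6) (use q1 False m q in auto)
    qed
  qed
next
  case p1: False
  show ?thesis
  proof (cases "p = m")
    case pe: True
    have a: "m \<noteq> 1" "m - 1 \<noteq> m" "m \<noteq> m+1" "m - 1 \<noteq> m+1" "m - 1 + 1 = m" using m by auto
    show ?thesis
    proof (cases "q = m")
      case True show ?thesis unfolding pe True by (rule t7[OF a])
    next
      case qm: False
      show ?thesis
      proof (cases "q = m - 1")
        case True show ?thesis unfolding pe True by (rule t8[OF a])
      next
        case False
        show ?thesis unfolding pe by (rule t9[OF a]) (use qm False q m in auto)
      qed
    qed
  next
    case pm: False
    have a: "p \<noteq> 1" "p \<noteq> m" "p - 1 \<noteq> p" "p \<noteq> p+1" "p - 1 \<noteq> p+1" "p - 1 + 1 = p" using p p1 pm by auto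
    show ?thesis
    proof (cases "q = p")
      case True show ?thesis unfolding True by (rule t3[OF a])
    next
      case qp: False
      show ?thesis
      proof (cases "q = p - 1")
        case True show ?thesis unfolding True by (rule t4[OF a])
      next
        case qp1: False
        show ?thesis
        proof (cases "q = p + 1")
          case True show ?thesis unfolding True by (rule t5[OF a])
        next
          case False
          show ?thesis by (rule t10[OF a]) (use qp qp1 False p p1 in auto)
        qed
      qed
    qed
  qed
qed

lemma jac_entry:
  assumes m: "m \<ge> 2" and ij: "i < m" "j < m"
  shows "inv_jacobian m C mu th lam x $$ (i,j) = J m C mu th x (i+1) (j+1)"
proof -
  have "inv_jacobian m C mu th lam x $$ (i,j) = deriv (\<lambda>s. inv_rhs m C mu th lam (x((j + 1) := s)) (i + 1)) (x (j + 1))"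
    unfolding inv_jacobian_def using ij by simp
  also have "\<dots> = J m C mu th x (i+1) (j+1)"
    by (rule affine_deriv, rule trans[OF rhs_affine], insert m ij, auto)
  finally show ?thesis .
qed

lemma gersh:
  fixes B :: "complex mat"
  assumes B: "B \<in> carrier_mat n n" and ev: "eigenvalue B k"
  shows "\<exists>i<n. cmod (k - B$$(i,i)) \<le> (\<Sum>j\<in>{0..<n}-{i}. cmod (B$$(i,j)))"
proof -
  obtain v where v: "v \<in> carrier_vec n" "v \<noteq> 0\<^sub>v n" "B *\<^sub>v v = k \<cdot>\<^sub>v v"
    using ev B unfolding eigenvalue_def eigenvector_def by auto
  have "\<exists>j<n. v$j \<noteq> 0"
  proof (rule ccontr)
    assume "\<not> ?thesis"
    then have "v = 0\<^sub>v n" using v(1) by (intro eq_vecI) auto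
    then show False using v(2) by simp
  qed
  then obtain j0 where j0: "j0 < n" "v$j0 \<noteq> 0" by auto
  define M where "M = Max ((\<lambda>j. cmod (v$j)) ` {0..<n})"
  have fin: "finite ((\<lambda>j. cmod (v$j)) ` {0..<n})" by simp
  have ne: "(\<lambda>j. cmod (v$j)) ` {0..<n} \<noteq> {}" using j0 by auto
  have "M \<in> (\<lambda>j. cmod (v$j)) ` {0..<n}" unfolding M_def using Max_in[OF fin ne] .
  then obtain i where i: "i < n" "cmod (v$i) = M" by auto
  have le: "cmod (v$j) \<le> cmod (v$i)" if "j < n" for j
    using i(2) Max_ge[OF fin] that unfolding M_def by auto
  have vi: "cmod (v$i) > 0" using le[OF j0(1)] j0(2) by (smt (verit) norm_le_zero_iff)
  have "(B *\<^sub>v v) $ i = (\<Sum>j\<in>{0..<n}. B$$(i,j) * v$j)"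
    using B v(1) i(1) by (simp add: scalar_prod_def)
  also have "\<dots> = B$$(i,i) * v$i + (\<Sum>j\<in>{0..<n}-{i}. B$$(i,j) * v$j)"
    using i(1) by (subst sum.remove[of _ i]) auto
  finally have "(k - B$$(i,i)) * v$i = (\<Sum>j\<in>{0..<n}-{i}. B$$(i,j) * v$j)"
    using v(3) i(1) v(1) by (simp add: algebra_simps)
  then have "cmod (k - B$$(i,i)) * cmod (v$i) = cmod (\<Sum>j\<in>{0..<n}-{i}. B$$(i,j) * v$j)"
    by (metis norm_mult)
  also have "\<dots> \<le> (\<Sum>j\<in>{0..<n}-{i}. cmod (B$$(i,j)) * cmod (v$j))"
    by (rule order_trans[OF norm_sum]) (simp add: norm_mult)
  also have "\<dots> \<le> (\<Sum>j\<in>{0..<n}-{i}. cmod (B$$(i,j)) * cmod (v$i))"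
    by (rule sum_mono) (auto intro: mult_left_mono le)
  also have "\<dots> = (\<Sum>j\<in>{0..<n}-{i}. cmod (B$$(i,j))) * cmod (v$i)"
    by (simp add: sum_distrib_right)
  finally have "cmod (k - B$$(i,i)) \<le> (\<Sum>j\<in>{0..<n}-{i}. cmod (B$$(i,j)))"
    using vi by simp
  then show ?thesis using i(1) by auto
qed

lemma colsum:
  assumes m: "m \<ge> 2"
    and Cp: "\<forall>i\<in>{1..m}. C i > 0"
    and mup: "\<forall>i\<in>{1..m}. mu i \<ge> 0"
    and xb: "\<forall>i\<in>{1..m}. 0 \<le> x i \<and> x i \<le> C i"
    and h1: "mu 2 / C 1 < mu 1 / C 1 + th 1"
    and h2: "\<forall>i\<in>{2..m - 1}. mu i / C (i - 1) + mu (i + 1) / C (i + 1) < th i"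
    and h3: "mu m / C (m - 1) < th m"
    and i: "i < m"
  shows "J m C mu th x (i+1) (i+1) + (\<Sum>j\<in>{0..<m}-{i}. \<bar>J m C mu th x (j+1) (i+1)\<bar>) < 0"
proof -
  define f where "f j = \<bar>J m C mu th x (j+1) (i+1)\<bar>" for j
  have zero: "f j = 0" if "j \<noteq> i" "j+1 \<noteq> i" "j \<noteq> i+1" for j
    using that unfolding f_def J_def by auto
  have red: "(\<Sum>j\<in>{0..<m}-{i}. f j) = (\<Sum>j\<in>{0..<m}\<inter>{j. j+1 = i \<or> j = i+1}. f j)"
    by (rule sum.mono_neutral_right) (auto intro: zero)
  show ?thesis
  proof (cases "i = 0")
    case True
    have S: "{0..<m}\<inter>{j. j+1 = i \<or> j = i+1} = {1}" using True m by auto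
    have C1: "C 1 > 0" and C2: "C 2 > 0" "mu 2 \<ge> 0" "x 2 \<le> C 2" using Cp m mup xb by auto
    have J21: "J m C mu th x 2 1 = mu 2 / C 1 * ((C 2 - x 2) / C 2)" by (simp add: J_def)
    have J11: "J m C mu th x 1 1 = -(mu 1/C 1) - th 1 - mu 2/C 1*((C 2 - x 2)/C 2)" by (simp add: J_def)
    have nn: "mu 2 / C 1 * ((C 2 - x 2) / C 2) \<ge> 0" using C1 C2 by simp
    have "mu 2 / C 1 \<ge> 0" using C1 C2 by simp
    then have "0 < mu 1 / C 1 + th 1" using h1 by linarith
    moreover have "(\<Sum>j\<in>{0..<m}-{i}. f j) = mu 2 / C 1 * ((C 2 - x 2) / C 2)"
    proof -
      have "f 1 = \<bar>J m C mu th x 2 1\<bar>" unfolding f_def True by (simp add: numeral_2_eq_2)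
      also have "\<dots> = mu 2 / C 1 * ((C 2 - x 2) / C 2)" by (subst J21, rule abs_of_nonneg[OF nn])
      finally show ?thesis unfolding red S by simp
    qed
    ultimately show ?thesis using True J11 unfolding f_def by simp
  next
    case i0: False
    show ?thesis
    proof (cases "i = m - 1")
      case True
      have S: "{0..<m}\<inter>{j. j+1 = i \<or> j = i+1} = {m-2}" using True m by auto
      have Cs: "C (m-1) > 0" "C m > 0" "mu m \<ge> 0" "x (m-1) \<ge> 0" using Cp m mup xb by auto
      have e1: "m - 2 + 1 = m - 1" "m - 1 + 1 = m" "m \<noteq> 1" "m - 1 \<noteq> m" using m by auto
      have Jo: "J m C mu th x (m-1) m = mu m * x (m-1) / (C (m-1) * C m)"
        using e1 by (simp add: J_def)
      have Jd: "J m C mu th x m m = -(mu m * x (m-1)/(C (m-1)*C m)) - th m"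
        using e1 by (simp add: J_def)
      have nn: "mu m * x (m-1) / (C (m-1) * C m) \<ge> 0" using Cs by simp
      have "mu m / C (m-1) \<ge> 0" using Cs by simp
      then have "0 < th m" using h3 by linarith
      moreover have "(\<Sum>j\<in>{0..<m}-{i}. f j) = mu m * x (m-1) / (C (m-1) * C m)"
      proof -
        have "f (m-2) = \<bar>J m C mu th x (m-1) m\<bar>" unfolding f_def True using e1 by simp
        also have "\<dots> = mu m * x (m-1) / (C (m-1) * C m)" by (subst Jo, rule abs_of_nonneg[OF nn])
        finally show ?thesis unfolding red S by simp
      qed
      ultimately show ?thesis using True Jd e1 unfolding f_def by simp
    next
      case False
      define q where "q = i + 1"
      have q: "2 \<le> q" "q \<le> m - 1" "q \<noteq> 1" "q \<noteq> m" "q - 1 + 1 = q" "q - 1 \<noteq> q"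
        using i0 False i unfolding q_def by auto
      have S: "{0..<m}\<inter>{j. j+1 = i \<or> j = i+1} = {i-1, i+1}" using i0 False i by auto
      have Cs: "C (q-1) > 0" "C q > 0" "C (q+1) > 0" "mu q \<ge> 0" "mu (q+1) \<ge> 0"
        "x (q-1) \<ge> 0" "x (q+1) \<le> C (q+1)"
      proof -
        have r: "q - 1 \<in> {1..m}" "q \<in> {1..m}" "q + 1 \<in> {1..m}" using q by auto
        show "C (q-1) > 0" "C q > 0" "C (q+1) > 0" using Cp r by blast+
        show "mu q \<ge> 0" "mu (q+1) \<ge> 0" using mup r by blast+
        show "x (q-1) \<ge> 0" "x (q+1) \<le> C (q+1)" using xb r by blast+
      qed
      have Jo1: "J m C mu th x (q-1) q = mu q * x (q-1) / (C (q-1) * C q)"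
        using q by (simp add: J_def)
      have Jo2: "J m C mu th x (q+1) q = mu (q+1)/C q*((C (q+1) - x (q+1))/C (q+1))"
        using q by (simp add: J_def)
      have Jd: "J m C mu th x q q = -(mu q*x(q-1)/(C(q-1)*C q)) - th q - mu(q+1)/C q*((C(q+1)-x(q+1))/C(q+1))"
        using q by (simp add: J_def)
      have nn1: "mu q * x (q-1) / (C (q-1) * C q) \<ge> 0" using Cs by simp
      have nn2: "mu (q+1)/C q*((C (q+1) - x (q+1))/C (q+1)) \<ge> 0" using Cs by simp
      have "mu q / C (q - 1) \<ge> 0" "mu (q + 1) / C (q + 1) \<ge> 0" using Cs by simp_all
      moreover have "mu q / C (q - 1) + mu (q + 1) / C (q + 1) < th q" using h2 q by auto
      ultimately have "0 < th q" by linarith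
      moreover have "(\<Sum>j\<in>{0..<m}-{i}. f j) = mu q * x (q-1) / (C (q-1) * C q) + mu (q+1)/C q*((C (q+1) - x (q+1))/C (q+1))"
      proof -
        have "f (i-1) = \<bar>J m C mu th x (q-1) q\<bar>" unfolding f_def q_def using i0 by simp
        also have "\<dots> = mu q * x (q-1) / (C (q-1) * C q)" by (subst Jo1, rule abs_of_nonneg[OF nn1])
        finally have a: "f (i-1) = mu q * x (q-1) / (C (q-1) * C q)" .
        have "f (i+1) = \<bar>J m C mu th x (q+1) q\<bar>" unfolding f_def q_def by simp
        also have "\<dots> = mu (q+1)/C q*((C (q+1) - x (q+1))/C (q+1))" by (subst Jo2, rule abs_of_nonneg[OF nn2])
        finally have b: "f (i+1) = mu (q+1)/C q*((C (q+1) - x (q+1))/C (q+1))" .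
        have "i - 1 \<noteq> i + 1" by simp
        then show ?thesis unfolding red S using a b by simp
      qed
      ultimately show ?thesis using Jd unfolding f_def q_def by simp
    qed
  qed
qed
theorem proposition6:
  fixes m :: nat and C mu th :: "nat \<Rightarrow> real" and lam :: real and xs :: "nat \<Rightarrow> real"
  assumes "m \<ge> 2"
    and "\<forall>i\<in>{1..m}. C i > 0"
    and "\<forall>i\<in>{1..m}. mu i \<ge> 0"
    and "\<forall>i\<in>{1..m}. th i \<ge> 0"
    and "lam \<ge> 0"
    and "\<forall>i\<in>{1..m}. inv_rhs m C mu th lam xs i = 0"
    and "\<forall>i\<in>{1..m}. 0 \<le> xs i \<and> xs i \<le> C i"
    and "mu 2 / C 1 < mu 1 / C 1 + th 1"
    and "\<forall>i\<in>{2..m - 1}. mu i / C (i - 1) + mu (i + 1) / C (i + 1) < th i"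
    and "mu m / C (m - 1) < th m"
  shows "stable_point m C mu th lam xs"
proof -
  let ?Jm = "inv_jacobian m C mu th lam xs"
  let ?A = "map_mat complex_of_real ?Jm"
  have Jc: "?Jm \<in> carrier_mat m m" by (simp add: inv_jacobian_def)
  have Ac: "?A \<in> carrier_mat m m" using Jc by simp
  have ATc: "transpose_mat ?A \<in> carrier_mat m m" using Ac by simp
  show ?thesis unfolding stable_point_def
  proof (intro allI impI)
    fix k assume ev: "eigenvalue ?A k"
    have "eigenvalue (transpose_mat ?A) k"
      using ev by (simp add: eigenvalue_root_char_poly[OF Ac] eigenvalue_root_char_poly[OF ATc] char_poly_transpose_mat[OF Ac])
    from gersh[OF ATc this] obtain i where i: "i < m"
      and g: "cmod (k - transpose_mat ?A $$ (i,i)) \<le> (\<Sum>j\<in>{0..<m}-{i}. cmod (transpose_mat ?A $$ (i,j)))"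
      by blast
    have ent: "transpose_mat ?A $$ (i,j) = complex_of_real (J m C mu th xs (j+1) (i+1))" if "j < m" for j
      using that i Jc jac_entry[OF assms(1) that i] by simp
    define d where "d = J m C mu th xs (i+1) (i+1)"
    have "cmod (k - complex_of_real d) \<le> (\<Sum>j\<in>{0..<m}-{i}. \<bar>J m C mu th xs (j+1) (i+1)\<bar>)"
    proof -
      have "(\<Sum>j\<in>{0..<m}-{i}. cmod (transpose_mat ?A $$ (i,j))) = (\<Sum>j\<in>{0..<m}-{i}. \<bar>J m C mu th xs (j+1) (i+1)\<bar>)"
        by (rule sum.cong) (auto simp: ent)
      then show ?thesis using g ent[OF i] unfolding d_def by simp
    qed
    moreover have "Re k \<le> cmod (k - complex_of_real d) + d"
      using complex_Re_le_cmod[of "k - complex_of_real d"] by simp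
    moreover have "d + (\<Sum>j\<in>{0..<m}-{i}. \<bar>J m C mu th xs (j+1) (i+1)\<bar>) < 0"
      unfolding d_def by (rule colsum[OF assms(1) assms(2) assms(3) assms(7) assms(8) assms(9) assms(10) i])
    ultimately show "Re k < 0" by linarith
  qed
qed

end
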